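(* Let $(\Omega,\mathcal{F})$ be a measurable space, $T:\Omega\to\Omega$ a measurable transformation and $V$ a $T$-invariant upper probability. Then $V$ is ergodic with respect to $T$ if and only if there exists a unique $Q\in\mathcal{M}^e(T)\cap\operatorname{core}(V)$ such that for every $f\in L^1(\Omega,\mathcal{F},Q)$, $$\lim_{n\to\infty}\frac{1}{n}\sum_{i=0}^{n-1}f(T^i\omega)=\int f\,dQ\quad\text{for }V\text{-a.s. }\omega\in\Omega.$$
   Context: A capacity is a monotone map $\mu:\mathcal{F}\to[0,1]$ with $\mu(\emptyset)=0,\mu(\Omega)=1$. An upper probability is a capacity $V$ such that $V(A)=\max_{P\in\Lambda}P(A)$ for a set $\Lambda$ of probabilities compact in the weak* (setwise convergence) topology. $V$ is $T$-invariant if $V(T^{-1}A)=V(A)$ for all $A\in\mathcal{F}$. $\mathcal{I}=\{A\in\mathcal{F}:T^{-1}A=A\}$. A $T$-invariant capacity $\mu$ is ergodic if for each $B\in\mathcal{I}$, $\mu(B)\in\{0,1\}$ and ($\mu(B)=0$ or $\mu(\Omega\setminus B)=0$). $\operatorname{core}(V)$ is the set of finitely additive normalized $P:\mathcal{F}\to[0,1]$ with $P\le V$ on $\mathcal{F}$. $\mathcal{M}^e(T)$ is the set of $T$-invariant probabilities $P$ with $P(A)\in\{0,1\}$ for all $A\in\mathcal{I}$. A statement holds $V$-a.s. if it holds on a set $A\in\mathcal{F}$ with $V(\Omega\setminus A)=0$. *)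

theory Defs
  imports "HOL-Probability.Probability"
begin

definition capacity :: "'a measure \<Rightarrow> ('a set \<Rightarrow> real) \<Rightarrow> bool" where
  "capacity M V \<longleftrightarrow>
     (\<forall>A\<in>sets M. 0 \<le> V A \<and> V A \<le> 1) \<and>
     (\<forall>A\<in>sets M. \<forall>B\<in>sets M. A \<subseteq> B \<longrightarrow> V A \<le> V B) \<and>
     V {} = 0 \<and> V (space M) = 1"

text \<open>Representation of a probability measure as the function A \<mapsto> P(A) on sets M;
  the product topology on functions 'a set \<Rightarrow> real is the topology of setwise convergence.\<close>
definition setwise_repr :: "'a measure \<Rightarrow> 'a measure \<Rightarrow> ('a set \<Rightarrow> real)" where
  "setwise_repr M P = (\<lambda>A. if A \<in> sets M then measure P A else 0)"

definition upper_probability :: "'a measure \<Rightarrow> ('a set \<Rightarrow> real) \<Rightarrow> bool" where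
  "upper_probability M V \<longleftrightarrow> capacity M V \<and>
     (\<exists>\<Lambda>. \<Lambda> \<noteq> {} \<and> (\<forall>P\<in>\<Lambda>. prob_space P \<and> sets P = sets M) \<and>
          compact (setwise_repr M ` \<Lambda>) \<and>
          (\<forall>A\<in>sets M. (\<forall>P\<in>\<Lambda>. measure P A \<le> V A) \<and> (\<exists>P\<in>\<Lambda>. measure P A = V A)))"

definition T_invariant_cap :: "'a measure \<Rightarrow> ('a \<Rightarrow> 'a) \<Rightarrow> ('a set \<Rightarrow> real) \<Rightarrow> bool" where
  "T_invariant_cap M T V \<longleftrightarrow> (\<forall>A\<in>sets M. V (T -` A \<inter> space M) = V A)"

definition inv_sets :: "'a measure \<Rightarrow> ('a \<Rightarrow> 'a) \<Rightarrow> 'a set set" where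
  "inv_sets M T = {A \<in> sets M. T -` A \<inter> space M = A}"

definition ergodic_cap :: "'a measure \<Rightarrow> ('a \<Rightarrow> 'a) \<Rightarrow> ('a set \<Rightarrow> real) \<Rightarrow> bool" where
  "ergodic_cap M T V \<longleftrightarrow> T_invariant_cap M T V \<and>
     (\<forall>B\<in>inv_sets M T. (V B = 0 \<or> V B = 1) \<and> (V B = 0 \<or> V (space M - B) = 0))"

definition core :: "'a measure \<Rightarrow> ('a set \<Rightarrow> real) \<Rightarrow> ('a set \<Rightarrow> real) set" where
  "core M V = {P. (\<forall>A\<in>sets M. 0 \<le> P A \<and> P A \<le> 1 \<and> P A \<le> V A) \<and> P (space M) = 1 \<and>
      (\<forall>A\<in>sets M. \<forall>B\<in>sets M. A \<inter> B = {} \<longrightarrow> P (A \<union> B) = P A + P B)}"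

definition ergodic_probs :: "'a measure \<Rightarrow> ('a \<Rightarrow> 'a) \<Rightarrow> 'a measure set" where
  "ergodic_probs M T = {P. prob_space P \<and> sets P = sets M \<and>
      (\<forall>A\<in>sets M. measure P (T -` A \<inter> space M) = measure P A) \<and>
      (\<forall>A\<in>inv_sets M T. measure P A = 0 \<or> measure P A = 1)}"

definition cap_ae :: "'a measure \<Rightarrow> ('a set \<Rightarrow> real) \<Rightarrow> ('a \<Rightarrow> bool) \<Rightarrow> bool" where
  "cap_ae M V P \<longleftrightarrow> (\<exists>A\<in>sets M. V (space M - A) = 0 \<and> (\<forall>\<omega>\<in>A. P \<omega>))"

end

theory Submission
  imports Defs
begin

definition bS :: "('a \<Rightarrow> 'a) \<Rightarrow> ('a \<Rightarrow> real) \<Rightarrow> nat \<Rightarrow> 'a \<Rightarrow> real" where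
  "bS T g n x = (\<Sum>i<n. g ((T ^^ i) x))"

lemma bS_0[simp]: "bS T g 0 x = 0" by (simp add: bS_def)

lemma bS_Suc: "bS T g (Suc n) x = g x + bS T g n (T x)"
  unfolding bS_def sum.lessThan_Suc_shift by (simp add: funpow_Suc_right del: funpow.simps)

locale mpt = prob_space Q for Q :: "'a measure" +
  fixes T :: "'a \<Rightarrow> 'a"
  assumes Tm[measurable]: "T \<in> measurable Q Q" and Tinv: "distr Q Q T = Q"
begin

lemma Tn_meas[measurable]: "(T ^^ n) \<in> measurable Q Q"
proof (induction n)
  case (Suc n)
  have "(T ^^ n) \<circ> T \<in> measurable Q Q" by (rule measurable_comp[OF Tm Suc])
  then show ?case by (simp only: funpow_Suc_right)
qed simp

lemma integrable_T:
  fixes g :: "'a \<Rightarrow> real"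
  assumes "integrable Q g" shows "integrable Q (\<lambda>x. g (T x))"
proof -
  have g[measurable]: "g \<in> borel_measurable Q" using assms by auto
  have "integrable (distr Q Q T) g" using Tinv assms by simp
  then show ?thesis using integrable_distr_eq[of T Q Q g] by simp
qed

lemma integral_T:
  fixes g :: "'a \<Rightarrow> real"
  assumes "integrable Q g" shows "integral\<^sup>L Q (\<lambda>x. g (T x)) = integral\<^sup>L Q g"
proof -
  have g[measurable]: "g \<in> borel_measurable Q" using assms by auto
  have "integral\<^sup>L Q (\<lambda>x. g (T x)) = integral\<^sup>L (distr Q Q T) g"
    using integral_distr[of T Q Q g] by simp
  then show ?thesis using Tinv by simp
qed

lemma integrable_Tn:
  fixes g :: "'a \<Rightarrow> real"
  assumes "integrable Q g" shows "integrable Q (\<lambda>x. g ((T ^^ n) x))"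
proof (induction n)
  case 0 then show ?case using assms by simp
next
  case (Suc n)
  from integrable_T[OF Suc] show ?case by (simp add: funpow_Suc_right del: funpow.simps)
qed

lemma integrable_bS:
  assumes "integrable Q g" shows "integrable Q (bS T g n)"
  unfolding bS_def[abs_def] using integrable_Tn[OF assms] by auto

lemma bS_meas[measurable]:
  assumes "g \<in> borel_measurable Q" shows "bS T g n \<in> borel_measurable Q"
  unfolding bS_def[abs_def] using assms by measurable

lemma maximal_ergodic_N:
  assumes g: "integrable Q g"
  shows "0 \<le> integral\<^sup>L Q (\<lambda>x. indicator {x. 0 < Max ((\<lambda>k. bS T g k x) ` {..N})} x * g x)"
proof -
  define Mx where "Mx x = Max ((\<lambda>k. bS T g k x) ` {..N})" for x
  have gm[measurable]: "g \<in> borel_measurable Q" using g by auto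
  have Mm[measurable]: "Mx \<in> borel_measurable Q" unfolding Mx_def by measurable
  have M0: "0 \<le> Mx x" for x
    unfolding Mx_def by (rule Max_ge_iff[THEN iffD2]) (auto intro!: bexI[of _ 0])
  have Mstep: "Mx x \<le> g x + Mx (T x)" if "0 < Mx x" for x
  proof -
    obtain k where k: "k \<le> N" "Mx x = bS T g k x"
    proof -
      have "Mx x \<in> (\<lambda>k. bS T g k x) ` {..N}" unfolding Mx_def by (rule Max_in) auto
      then show ?thesis using that by auto
    qed
    then have "k \<noteq> 0" using that by (metis bS_0 less_irrefl)
    then obtain j where j: "k = Suc j" by (cases k) auto
    have "bS T g j (T x) \<le> Mx (T x)"
      unfolding Mx_def using k j by (intro Max_ge) auto
    then show ?thesis using k j by (simp add: bS_Suc)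
  qed
  have Mint: "integrable Q Mx"
  proof (rule Bochner_Integration.integrable_bound[where f="\<lambda>x. \<Sum>k\<le>N. \<bar>bS T g k x\<bar>"])
    show "integrable Q (\<lambda>x. \<Sum>k\<le>N. \<bar>bS T g k x\<bar>)"
      using integrable_bS[OF g] by auto
    show "AE x in Q. norm (Mx x) \<le> norm (\<Sum>k\<le>N. \<bar>bS T g k x\<bar>)"
    proof (intro AE_I2)
      fix x
      obtain k where k: "k \<le> N" "Mx x = bS T g k x"
    proof -
      have "Mx x \<in> (\<lambda>k. bS T g k x) ` {..N}" unfolding Mx_def by (rule Max_in) auto
      then show ?thesis using that by auto
    qed
      have "\<bar>bS T g k x\<bar> \<le> (\<Sum>k\<le>N. \<bar>bS T g k x\<bar>)"
        using k by (intro member_le_sum) auto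
      then show "norm (Mx x) \<le> norm (\<Sum>k\<le>N. \<bar>bS T g k x\<bar>)" using k by simp
    qed
  qed measurable
  define I :: "'a \<Rightarrow> real" where "I x = indicator {x. 0 < Mx x} x" for x
  have Im[measurable]: "(I :: 'a \<Rightarrow> real) \<in> borel_measurable Q" unfolding I_def by measurable
  have pt: "Mx x \<le> I x * g x + Mx (T x)" for x
    using Mstep[of x] M0[of x] M0[of "T x"] by (cases "0 < Mx x") (auto simp: I_def indicator_def)
  have i1: "integrable Q (\<lambda>x. I x * g x)"
    by (rule Bochner_Integration.integrable_bound[OF g]) (auto simp: I_def indicator_def)
  have "integral\<^sup>L Q Mx \<le> integral\<^sup>L Q (\<lambda>x. I x * g x + Mx (T x))"
    using pt by (intro integral_mono Mint Bochner_Integration.integrable_add i1 integrable_T) auto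
  also have "\<dots> = integral\<^sup>L Q (\<lambda>x. I x * g x) + integral\<^sup>L Q Mx"
    using i1 integrable_T[OF Mint] integral_T[OF Mint] by simp
  finally show ?thesis unfolding I_def Mx_def by simp
qed

lemma maximal_full:
  fixes g :: "'a \<Rightarrow> real"
  assumes g: "integrable Q g" and U: "AE x in Q. \<exists>n. 0 < bS T g n x"
  shows "0 \<le> integral\<^sup>L Q g"
proof -
  have gm[measurable]: "g \<in> borel_measurable Q" using g by auto
  define s where "s N x = indicator {x. 0 < Max ((\<lambda>k. bS T g k x) ` {..N})} x * g x" for N x
  have sm[measurable]: "s N \<in> borel_measurable Q" for N unfolding s_def by measurable
  have "(\<lambda>N. integral\<^sup>L Q (s N)) \<longlonglongrightarrow> integral\<^sup>L Q g"
  proof (rule integral_dominated_convergence[where w="\<lambda>x. \<bar>g x\<bar>"])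
    show "integrable Q (\<lambda>x. \<bar>g x\<bar>)" using g by auto
    show "AE x in Q. norm (s N x) \<le> \<bar>g x\<bar>" for N
      by (intro AE_I2) (auto simp: s_def indicator_def)
    show "AE x in Q. (\<lambda>N. s N x) \<longlonglongrightarrow> g x"
      using U
    proof (rule AE_mp, intro AE_I2 impI)
      fix x assume "\<exists>n. 0 < bS T g n x"
      then obtain n where n: "0 < bS T g n x" by auto
      have "s N x = g x" if "n \<le> N" for N
      proof -
        have "bS T g n x \<le> Max ((\<lambda>k. bS T g k x) ` {..N})"
          using that by (intro Max_ge) auto
        then show ?thesis using n by (simp add: s_def indicator_def)
      qed
      then have "eventually (\<lambda>N. s N x = g x) sequentially"
        by (rule eventually_sequentiallyI)
      then show "(\<lambda>N. s N x) \<longlonglongrightarrow> g x"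
        by (rule tendsto_eventually[OF eventually_mono]) auto
    qed
  qed measurable
  moreover have "0 \<le> integral\<^sup>L Q (s N)" for N
    unfolding s_def by (rule maximal_ergodic_N[OF g])
  ultimately show ?thesis by (intro LIMSEQ_le_const) auto
qed

lemma bS_diff: "bS T (\<lambda>x. f x - c) n x = bS T f n x - real n * c"
  unfolding bS_def by (simp add: sum_subtractf)

lemma bS_neg: "bS T (\<lambda>x. c - f x) n x = real n * c - bS T f n x"
  unfolding bS_def by (simp add: sum_subtractf)

lemma bounded_ae:
  fixes g :: "'a \<Rightarrow> real"
  assumes erg: "\<And>A. A \<in> sets Q \<Longrightarrow> T -` A \<inter> space Q = A \<Longrightarrow> prob A = 0 \<or> prob A = 1"
    and g: "integrable Q g" and neg: "integral\<^sup>L Q g < 0"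
  shows "AE x in Q. \<exists>K. \<forall>n. bS T g n x \<le> K"
proof -
  have gm[measurable]: "g \<in> borel_measurable Q" using g by auto
  define U where "U = {x\<in>space Q. \<forall>m::nat. \<exists>n. real m < bS T g n x}"
  have Um: "U \<in> sets Q" unfolding U_def by measurable
  have Tsp: "T x \<in> space Q" if "x \<in> space Q" for x using Tm that by (rule measurable_space)
  have Uinv: "T -` U \<inter> space Q = U"
  proof (intro set_eqI iffI)
    fix x assume x: "x \<in> T -` U \<inter> space Q"
    show "x \<in> U" unfolding U_def
    proof (intro CollectI conjI allI)
      show "x \<in> space Q" using x by auto
      fix m :: nat
      obtain n where n: "real (m + nat \<lceil>\<bar>g x\<bar>\<rceil>) < bS T g n (T x)"
        using x unfolding U_def by blast
      have "real m < g x + bS T g n (T x)" using n by linarith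
      then show "\<exists>n. real m < bS T g n x" by (metis bS_Suc)
    qed
  next
    fix x assume x: "x \<in> U"
    then have xs: "x \<in> space Q" unfolding U_def by auto
    have "T x \<in> U" unfolding U_def
    proof (intro CollectI conjI allI)
      show "T x \<in> space Q" using Tsp xs .
      fix m :: nat
      obtain n where n: "real (m + nat \<lceil>\<bar>g x\<bar>\<rceil>) < bS T g n x"
        using x unfolding U_def by blast
      then have "n \<noteq> 0" by (metis bS_0 of_nat_0_le_iff not_less)
      then obtain j where j: "n = Suc j" by (cases n) auto
      have "real m < bS T g j (T x)" using n unfolding j bS_Suc by linarith
      then show "\<exists>n. real m < bS T g n (T x)" by blast
    qed
    then show "x \<in> T -` U \<inter> space Q" using xs by auto
  qed
  have "prob U = 0"
  proof (rule ccontr)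
    assume "prob U \<noteq> 0"
    then have "prob U = 1" using erg[OF Um Uinv] by auto
    then have "AE x in Q. x \<in> U" using Um by (simp add: prob_eq_1)
    then have "AE x in Q. \<exists>n. 0 < bS T g n x"
      by (rule AE_mp) (auto simp: U_def intro!: AE_I2 dest!: spec[of _ 0])
    from maximal_full[OF g this] neg show False by simp
  qed
  then have "AE x in Q. x \<notin> U" using Um by (simp add: prob_eq_0)
  then show ?thesis
  proof (rule AE_mp, intro AE_I2 impI)
    fix x assume "x \<in> space Q" "x \<notin> U"
    then obtain m :: nat where "\<forall>n. bS T g n x \<le> real m" unfolding U_def by (auto simp: not_less)
    then show "\<exists>K. \<forall>n. bS T g n x \<le> K" by blast
  qed
qed

end

lemma conv_from_bounds:
  fixes x :: "nat \<Rightarrow> real"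
  assumes up: "\<And>k::nat. \<exists>K. \<forall>n>0. x n \<le> c + 1 / real (Suc k) + K / real n"
    and lo: "\<And>k::nat. \<exists>K. \<forall>n>0. c - 1 / real (Suc k) - K / real n \<le> x n"
  shows "x \<longlonglongrightarrow> c"
proof (rule LIMSEQ_I)
  fix r :: real assume r: "0 < r"
  obtain k :: nat where k: "inverse (real (Suc k)) < r / 2"
    using reals_Archimedean[of "r/2"] r by auto
  obtain K1 where K1: "\<forall>n>0. x n \<le> c + 1 / real (Suc k) + K1 / real n" using up by blast
  obtain K2 where K2: "\<forall>n>0. c - 1 / real (Suc k) - K2 / real n \<le> x n" using lo by blast
  obtain N :: nat where N: "2 * (\<bar>K1\<bar> + \<bar>K2\<bar>) / r < real N"
    using reals_Archimedean2 by blast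
  show "\<exists>no. \<forall>n\<ge>no. norm (x n - c) < r"
  proof (intro exI allI impI)
    fix n assume n: "Suc N \<le> n"
    then have npos: "0 < real n" by simp
    have "2 * (\<bar>K1\<bar> + \<bar>K2\<bar>) < r * real n"
      using N n r by (simp add: divide_less_eq mult.commute) (smt (verit) of_nat_le_iff Suc_le_eq mult_strict_left_mono of_nat_less_iff)
    then have b: "(\<bar>K1\<bar> + \<bar>K2\<bar>) / real n < r / 2"
      using npos by (simp add: divide_less_eq)
    have "\<bar>K1\<bar> / real n \<le> (\<bar>K1\<bar> + \<bar>K2\<bar>) / real n" "\<bar>K2\<bar> / real n \<le> (\<bar>K1\<bar> + \<bar>K2\<bar>) / real n"
      using npos by (auto intro: divide_right_mono)
    moreover have "K1 / real n \<le> \<bar>K1\<bar> / real n" "K2 / real n \<le> \<bar>K2\<bar> / real n"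
      using npos by (auto intro: divide_right_mono)
    moreover have "x n \<le> c + 1 / real (Suc k) + K1 / real n" "c - 1 / real (Suc k) - K2 / real n \<le> x n"
      using K1 K2 npos by auto
    moreover have "1 / real (Suc k) < r / 2" using k by (simp add: inverse_eq_divide)
    ultimately show "norm (x n - c) < r" using b unfolding real_norm_def abs_less_iff by linarith
  qed
qed

context mpt begin

lemma birkhoff:
  fixes f :: "'a \<Rightarrow> real"
  assumes erg: "\<And>A. A \<in> sets Q \<Longrightarrow> T -` A \<inter> space Q = A \<Longrightarrow> prob A = 0 \<or> prob A = 1"
    and f: "integrable Q f"
  shows "AE x in Q. (\<lambda>n. bS T f n x / real n) \<longlonglongrightarrow> integral\<^sup>L Q f"
proof -
  define c where "c = integral\<^sup>L Q f"
  have A1: "AE x in Q. \<forall>k::nat. \<exists>K. \<forall>n. bS T (\<lambda>x. f x - (c + 1 / real (Suc k))) n x \<le> K"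
  proof (subst AE_all_countable, intro allI)
    fix k :: nat
    have i: "integrable Q (\<lambda>x. f x - (c + 1 / real (Suc k)))" using f by auto
    have "integral\<^sup>L Q (\<lambda>x. f x - (c + 1 / real (Suc k))) = c - (c + 1 / real (Suc k))"
      using f by (simp add: Bochner_Integration.integral_diff c_def prob_space)
    also have "\<dots> < 0" by simp
    finally show "AE x in Q. \<exists>K. \<forall>n. bS T (\<lambda>x. f x - (c + 1 / real (Suc k))) n x \<le> K"
      using bounded_ae[OF erg i] by blast
  qed
  have A2: "AE x in Q. \<forall>k::nat. \<exists>K. \<forall>n. bS T (\<lambda>x. (c - 1 / real (Suc k)) - f x) n x \<le> K"
  proof (subst AE_all_countable, intro allI)
    fix k :: nat
    have i: "integrable Q (\<lambda>x. (c - 1 / real (Suc k)) - f x)" using f by auto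
    have "integral\<^sup>L Q (\<lambda>x. (c - 1 / real (Suc k)) - f x) = (c - 1 / real (Suc k)) - c"
      using f by (simp add: Bochner_Integration.integral_diff c_def prob_space)
    also have "\<dots> < 0" by simp
    finally show "AE x in Q. \<exists>K. \<forall>n. bS T (\<lambda>x. (c - 1 / real (Suc k)) - f x) n x \<le> K"
      using bounded_ae[OF erg i] by blast
  qed
  show ?thesis unfolding c_def[symmetric]
    using A1 A2
  proof (elim AE_mp, intro AE_I2 impI)
    fix x
    assume B1: "\<forall>k::nat. \<exists>K. \<forall>n. bS T (\<lambda>x. f x - (c + 1 / real (Suc k))) n x \<le> K"
      and B2: "\<forall>k::nat. \<exists>K. \<forall>n. bS T (\<lambda>x. (c - 1 / real (Suc k)) - f x) n x \<le> K"
    show "(\<lambda>n. bS T f n x / real n) \<longlonglongrightarrow> c"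
    proof (rule conv_from_bounds)
      fix k :: nat
      obtain K where K: "\<forall>n. bS T (\<lambda>x. f x - (c + 1 / real (Suc k))) n x \<le> K" using B1 by blast
      show "\<exists>K. \<forall>n>0. bS T f n x / real n \<le> c + 1 / real (Suc k) + K / real n"
      proof (intro exI allI impI)
        fix n :: nat assume n: "0 < n"
        have "bS T f n x \<le> real n * (c + 1 / real (Suc k)) + K" using K[rule_format, of n] by (simp add: bS_diff)
        then show "bS T f n x / real n \<le> c + 1 / real (Suc k) + K / real n"
          using n by (simp add: divide_le_eq add_divide_distrib algebra_simps)
      qed
    next
      fix k :: nat
      obtain K where K: "\<forall>n. bS T (\<lambda>x. (c - 1 / real (Suc k)) - f x) n x \<le> K" using B2 by blast
      show "\<exists>K. \<forall>n>0. c - 1 / real (Suc k) - K / real n \<le> bS T f n x / real n"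
      proof (intro exI allI impI)
        fix n :: nat assume n: "0 < n"
        have "real n * (c - 1 / real (Suc k)) - K \<le> bS T f n x" using K[rule_format, of n] by (simp add: bS_neg)
        then show "c - 1 / real (Suc k) - K / real n \<le> bS T f n x / real n"
          using n by (simp add: le_divide_eq diff_divide_distrib algebra_simps)
      qed
    qed
  qed
qed

end

lemma up_basic:
  assumes "upper_probability M V"
  obtains \<Lambda> where "\<Lambda> \<noteq> {}" "\<And>P. P \<in> \<Lambda> \<Longrightarrow> prob_space P \<and> sets P = sets M"
    "compact (setwise_repr M ` \<Lambda>)"
    "\<And>A P. A \<in> sets M \<Longrightarrow> P \<in> \<Lambda> \<Longrightarrow> measure P A \<le> V A"
    "\<And>A. A \<in> sets M \<Longrightarrow> \<exists>P\<in>\<Lambda>. measure P A = V A"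
proof -
  from assms obtain \<Lambda> where L: "\<Lambda> \<noteq> {}" "\<forall>P\<in>\<Lambda>. prob_space P \<and> sets P = sets M"
    "compact (setwise_repr M ` \<Lambda>)"
    "\<forall>A\<in>sets M. (\<forall>P\<in>\<Lambda>. measure P A \<le> V A) \<and> (\<exists>P\<in>\<Lambda>. measure P A = V A)"
    unfolding upper_probability_def by auto
  show ?thesis
    by (rule that[OF L(1) _ L(3)]) (use L(2,4) in auto)
qed

lemma up_capacity: "upper_probability M V \<Longrightarrow> capacity M V"
  unfolding upper_probability_def by blast

lemma up_subadd:
  assumes up: "upper_probability M V" and A: "A \<in> sets M" and B: "B \<in> sets M"
  shows "V (A \<union> B) \<le> V A + V B"
proof -
  obtain \<Lambda> where L: "\<Lambda> \<noteq> {}" "\<And>P. P \<in> \<Lambda> \<Longrightarrow> prob_space P \<and> sets P = sets M"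
    "\<And>A P. A \<in> sets M \<Longrightarrow> P \<in> \<Lambda> \<Longrightarrow> measure P A \<le> V A"
    "\<And>A. A \<in> sets M \<Longrightarrow> \<exists>P\<in>\<Lambda>. measure P A = V A"
    using up_basic[OF up] by (metis (no_types, lifting))
  have AB: "A \<union> B \<in> sets M" using A B by auto
  obtain P where P: "P \<in> \<Lambda>" "measure P (A \<union> B) = V (A \<union> B)" using L(4)[OF AB] by blast
  interpret P: prob_space P using L(2)[OF P(1)] by blast
  have sP: "sets P = sets M" using L(2)[OF P(1)] by blast
  have "measure P (A \<union> B) \<le> measure P A + measure P B"
    using A B sP by (intro measure_Un_le) auto
  also have "\<dots> \<le> V A + V B" using L(3)[OF A P(1)] L(3)[OF B P(1)] by simp
  finally show ?thesis using P by simp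
qed

lemma up_compl:
  assumes up: "upper_probability M V" and A: "A \<in> sets M"
  shows "1 \<le> V A + V (space M - A)"
proof -
  obtain \<Lambda> where L: "\<Lambda> \<noteq> {}" "\<And>P. P \<in> \<Lambda> \<Longrightarrow> prob_space P \<and> sets P = sets M"
    "\<And>A P. A \<in> sets M \<Longrightarrow> P \<in> \<Lambda> \<Longrightarrow> measure P A \<le> V A"
    using up_basic[OF up] by (metis (no_types, lifting))
  obtain P where P: "P \<in> \<Lambda>" using L(1) by blast
  interpret P: prob_space P using L(2)[OF P(1)] by blast
  have sP: "sets P = sets M" using L(2)[OF P(1)] by blast
  have sp: "space P = space M" using sP by (rule sets_eq_imp_space_eq)
  have "measure P (space M - A) = 1 - measure P A"
    using A sP sp P.prob_compl[of A] by simp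
  then have "1 = measure P A + measure P (space M - A)" by simp
  also have "\<dots> \<le> V A + V (space M - A)"
    using L(3)[OF A P] L(3)[of "space M - A", OF _ P] A by (intro add_mono) auto
  finally show ?thesis .
qed

lemma up_cont:
  assumes up: "upper_probability M V" and A: "range A \<subseteq> sets M" "decseq A" "(\<Inter>i. A i) = {}"
  shows "(\<lambda>i. V (A i)) \<longlonglongrightarrow> 0"
proof -
  obtain \<Lambda> where L: "\<Lambda> \<noteq> {}" "\<And>P. P \<in> \<Lambda> \<Longrightarrow> prob_space P \<and> sets P = sets M"
    "compact (setwise_repr M ` \<Lambda>)"
    "\<And>A P. A \<in> sets M \<Longrightarrow> P \<in> \<Lambda> \<Longrightarrow> measure P A \<le> V A"
    "\<And>A. A \<in> sets M \<Longrightarrow> \<exists>P\<in>\<Lambda>. measure P A = V A"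
    using up_basic[OF up] by (metis (no_types, lifting))
  have cap: "capacity M V" using up by (rule up_capacity)
  have Vnn: "0 \<le> V (A i)" for i using cap A(1) unfolding capacity_def by auto
  have mono: "measure P (A m) \<le> measure P (A k)" if "P \<in> \<Lambda>" "k \<le> m" for P k m
  proof -
    interpret P: prob_space P using L(2)[OF that(1)] by blast
    show ?thesis using L(2)[OF that(1)] A that by (intro P.finite_measure_mono) (auto simp: decseq_def)
  qed
  show ?thesis
  proof (rule LIMSEQ_I)
    fix r :: real assume r: "0 < r"
    have "setwise_repr M ` \<Lambda> \<subseteq> (\<Union>n. {q. q (A n) < r})"
    proof safe
      fix P assume P: "P \<in> \<Lambda>"
      interpret P: prob_space P using L(2)[OF P] by blast
      have "(\<lambda>i. measure P (A i)) \<longlonglongrightarrow> measure P (\<Inter>i. A i)"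
        using L(2)[OF P] A by (intro P.finite_Lim_measure_decseq) auto
      then have "(\<lambda>i. measure P (A i)) \<longlonglongrightarrow> 0" using A by simp
      then obtain n where "measure P (A n) < r" using r by (metis LIMSEQ_D diff_zero real_norm_def abs_less_iff order_refl)
      then show "setwise_repr M P \<in> (\<Union>n. {q. q (A n) < r})"
        using A(1) by (auto simp: setwise_repr_def)
    qed
    moreover have op: "open {q :: 'a set \<Rightarrow> real. q (A n) < r}" for n
      by (rule open_Collect_less) (auto intro: continuous_on_product_coordinates)
    ultimately obtain C where C: "C \<subseteq> UNIV" "finite C" "setwise_repr M ` \<Lambda> \<subseteq> (\<Union>n\<in>C. {q. q (A n) < r})"
      using compactE_image[OF L(3), of UNIV "\<lambda>n. {q. q (A n) < r}", OF op] by blast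
    define N where "N = Max (insert 0 C)"
    have small: "measure P (A N) < r" if PL: "P \<in> \<Lambda>" for P
    proof -
      obtain n where n: "n \<in> C" "setwise_repr M P (A n) < r" using C(3) PL by auto
      have "n \<le> N" unfolding N_def using n C(2) by auto
      then show ?thesis using mono[OF PL] n A(1) by (force simp: setwise_repr_def)
    qed
    show "\<exists>no. \<forall>n\<ge>no. norm (V (A n) - 0) < r"
    proof (intro exI allI impI)
      fix n assume "N \<le> n"
      obtain P where P: "P \<in> \<Lambda>" "measure P (A n) = V (A n)" using L(5) A(1) by blast
      have "V (A n) < r" using P small[OF P(1)] mono[OF P(1) \<open>N \<le> n\<close>] by simp
      then show "norm (V (A n) - 0) < r" using Vnn by simp
    qed
  qed
qed

lemma open_Collect_const: "open {x. c}"
  by (cases c) auto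

lemma cluster_point:
  fixes \<mu> :: "nat \<Rightarrow> 'b::topological_space"
  assumes K: "compact K" and mu: "\<And>n. \<mu> n \<in> K"
  obtains p where "p \<in> K" "\<And>U N. open U \<Longrightarrow> p \<in> U \<Longrightarrow> \<exists>n\<ge>N. \<mu> n \<in> U"
proof -
  have "filtermap \<mu> sequentially \<noteq> bot" by (simp add: filtermap_bot_iff)
  moreover have "eventually (\<lambda>x. x \<in> K) (filtermap \<mu> sequentially)"
    by (simp add: eventually_filtermap mu)
  ultimately obtain p where p: "p \<in> K" "inf (nhds p) (filtermap \<mu> sequentially) \<noteq> bot"
    using K unfolding compact_filter by blast
  show ?thesis
  proof (rule that[OF p(1)])
    fix U N assume U: "open U" "p \<in> U"
    show "\<exists>n\<ge>N. \<mu> n \<in> U"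
    proof (rule ccontr)
      assume "\<not> (\<exists>n\<ge>N. \<mu> n \<in> U)"
      then have e1: "eventually (\<lambda>q. q \<notin> U) (filtermap \<mu> sequentially)"
        by (auto simp: eventually_filtermap eventually_sequentially)
      have e2: "eventually (\<lambda>q. q \<in> U) (nhds p)" using U by (rule eventually_nhds_in_open)
      have "eventually (\<lambda>_. False) (inf (nhds p) (filtermap \<mu> sequentially))"
        unfolding eventually_inf using e1 e2 by blast
      then show False using p(2) by (simp add: eventually_False)
    qed
  qed
qed

lemma compact_unit_box: "compact (PiE UNIV (\<lambda>_::'a set. {0..1::real}))"
proof -
  have "compactin (product_topology (\<lambda>_::'a set. euclidean) UNIV) (PiE UNIV (\<lambda>_. {0..1::real}))"
    by (simp add: compactin_PiE)
  then show ?thesis by (simp add: euclidean_product_topology)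
qed

lemma tri_contra:
  fixes a b c d e :: real
  assumes "e < \<bar>a - b\<bar> / 3" "\<bar>c - d\<bar> \<le> e" "\<bar>c - a\<bar> < \<bar>a - b\<bar> / 3" "\<bar>d - b\<bar> < \<bar>a - b\<bar> / 3"
  shows False
  using assms by (cases "a \<le> b"; cases "c \<le> d"; cases "c \<le> a"; cases "d \<le> b") (simp_all add: abs_if split: if_splits)

locale setting =
  fixes M :: "'a measure" and T :: "'a \<Rightarrow> 'a" and V :: "'a set \<Rightarrow> real"
  assumes Tm[measurable]: "T \<in> measurable M M" and up: "upper_probability M V"
    and inv: "T_invariant_cap M T V"
begin

definition pre :: "nat \<Rightarrow> 'a set \<Rightarrow> 'a set" where
  "pre i A = (T ^^ i) -` A \<inter> space M"

lemma TnM[measurable]: "(T ^^ n) \<in> measurable M M"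
proof (induction n)
  case (Suc n)
  have "(T ^^ n) \<circ> T \<in> measurable M M" by (rule measurable_comp[OF Tm Suc])
  then show ?case by (simp only: funpow_Suc_right)
qed simp

lemma Tn_space: "x \<in> space M \<Longrightarrow> (T ^^ n) x \<in> space M"
  by (rule measurable_space[OF TnM])

lemma T_space: "x \<in> space M \<Longrightarrow> T x \<in> space M"
  by (rule measurable_space[OF Tm])

lemma pre_sets: "A \<in> sets M \<Longrightarrow> pre i A \<in> sets M"
  unfolding pre_def by (rule measurable_sets[OF TnM])

lemma pre_0: "A \<in> sets M \<Longrightarrow> pre 0 A = A"
  unfolding pre_def using sets.sets_into_space by auto

lemma pre_1: "pre 1 A = T -` A \<inter> space M"
  unfolding pre_def by simp

lemma funpow_Suc_app: "(T ^^ Suc i) x = (T ^^ i) (T x)"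
  by (simp add: funpow_swap1)

lemma pre_Suc: "pre (Suc i) A = T -` (pre i A) \<inter> space M"
  unfolding pre_def using T_space by (auto simp only: funpow_Suc_app vimage_eq Int_iff)

lemma pre_pre1: "pre i (pre 1 A) = pre (Suc i) A"
  unfolding pre_def using Tn_space by auto

lemma pre_pre1': "pre i (pre (Suc 0) A) = pre (Suc i) A"
  using pre_pre1 by simp

lemma pre_space: "pre i (space M) = space M"
  unfolding pre_def using Tn_space by auto

lemma pre_Un: "pre i (A \<union> B) = pre i A \<union> pre i B"
  unfolding pre_def by auto

lemma pre_disj: "A \<inter> B = {} \<Longrightarrow> pre i A \<inter> pre i B = {}"
  unfolding pre_def by auto

lemma V_pre: "A \<in> sets M \<Longrightarrow> V (pre i A) = V A"
proof (induction i)
  case 0 then show ?case by (simp add: pre_0)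
next
  case (Suc i)
  have "V (pre (Suc i) A) = V (pre i A)"
    unfolding pre_Suc by (rule bspec[OF inv[unfolded T_invariant_cap_def] pre_sets[OF Suc.prems]])
  then show ?case using Suc by simp
qed

lemma cap: "capacity M V" using up by (rule up_capacity)

lemma V_nn: "A \<in> sets M \<Longrightarrow> 0 \<le> V A" and V_le1: "A \<in> sets M \<Longrightarrow> V A \<le> 1"
  using cap unfolding capacity_def by auto

definition Kc :: "('a set \<Rightarrow> real) set" where
  "Kc = {p. (\<forall>A. A \<notin> sets M \<longrightarrow> p A = 0) \<and> (\<forall>A. A \<in> sets M \<longrightarrow> 0 \<le> p A \<and> p A \<le> V A) \<and>
      p (space M) = 1 \<and> (\<forall>A B. A \<in> sets M \<and> B \<in> sets M \<and> A \<inter> B = {} \<longrightarrow> p (A \<union> B) = p A + p B)}"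

lemma closed_Kc: "closed Kc"
  unfolding Kc_def
  by (intro closed_Collect_conj closed_Collect_all closed_Collect_imp open_Collect_const
      closed_Collect_eq closed_Collect_le continuous_intros continuous_on_product_coordinates)

lemma compact_Kc: "compact Kc"
proof -
  have "Kc \<subseteq> PiE UNIV (\<lambda>_. {0..1::real})"
  proof
    fix p assume p: "p \<in> Kc"
    have "p A \<in> {0..1}" for A
    proof (cases "A \<in> sets M")
      case True
      then have "0 \<le> p A" "p A \<le> V A" using p unfolding Kc_def by auto
      then show ?thesis using V_le1[OF True] by auto
    next
      case False
      then show ?thesis using p unfolding Kc_def by auto
    qed
    then show "p \<in> PiE UNIV (\<lambda>_. {0..1::real})" by (simp add: PiE_iff)
  qed
  then have "Kc = PiE UNIV (\<lambda>_. {0..1::real}) \<inter> Kc" by blast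
  also have "compact \<dots>" by (intro compact_Int_closed compact_unit_box closed_Kc)
  finally show ?thesis .
qed

lemma exists_inv_Kc:
  obtains p where "p \<in> Kc" "\<And>A. A \<in> sets M \<Longrightarrow> p (T -` A \<inter> space M) = p A"
proof -
  obtain \<Lambda> where L: "\<Lambda> \<noteq> {}" "\<And>P. P \<in> \<Lambda> \<Longrightarrow> prob_space P \<and> sets P = sets M"
    "\<And>A P. A \<in> sets M \<Longrightarrow> P \<in> \<Lambda> \<Longrightarrow> measure P A \<le> V A"
    using up_basic[OF up] by (metis (no_types, lifting))
  obtain P0 where P0: "P0 \<in> \<Lambda>" using L(1) by blast
  interpret P0: prob_space P0 using L(2)[OF P0] by blast
  have sP: "sets P0 = sets M" using L(2)[OF P0] by blast
  have spP: "space P0 = space M" using sP by (rule sets_eq_imp_space_eq)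
  define mu where "mu n A = (if A \<in> sets M then (\<Sum>i<Suc n. measure P0 (pre i A)) / real (Suc n) else 0)"
    for n A
  have mP_le: "measure P0 (pre i A) \<le> V A" if "A \<in> sets M" for i A
    using L(3)[OF pre_sets[OF that] P0] V_pre[OF that] by simp
  have mu_K: "mu n \<in> Kc" for n
  proof -
    have a: "0 \<le> mu n A \<and> mu n A \<le> V A" if A: "A \<in> sets M" for A
    proof -
      have "(\<Sum>i<Suc n. measure P0 (pre i A)) \<le> (\<Sum>i<Suc n. V A)"
        by (intro sum_mono mP_le A)
      then have "(\<Sum>i<Suc n. measure P0 (pre i A)) \<le> real (Suc n) * V A" by simp
      then have "mu n A \<le> V A" using A by (simp add: mu_def divide_le_eq mult.commute)
      moreover have "0 \<le> mu n A" using A by (simp add: mu_def sum_nonneg)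
      ultimately show ?thesis by simp
    qed
    have b: "mu n (space M) = 1"
      using P0.prob_space spP by (simp add: mu_def pre_space)
    have c: "mu n (A \<union> B) = mu n A + mu n B" if "A \<in> sets M" "B \<in> sets M" "A \<inter> B = {}" for A B
    proof -
      have "measure P0 (pre i (A \<union> B)) = measure P0 (pre i A) + measure P0 (pre i B)" for i
        unfolding pre_Un using that sP pre_sets pre_disj
        by (intro P0.finite_measure_Union) auto
      then show ?thesis using that by (simp add: mu_def sum.distrib add_divide_distrib)
    qed
    show ?thesis unfolding Kc_def
    proof (intro CollectI conjI allI impI)
      fix A assume "A \<notin> sets M" then show "mu n A = 0" by (simp add: mu_def)
    next
      fix A assume "A \<in> sets M" then show "0 \<le> mu n A" "mu n A \<le> V A" using a by auto
    next
      show "mu n (space M) = 1" by (rule b)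
    next
      fix A B assume "A \<in> sets M \<and> B \<in> sets M \<and> A \<inter> B = {}"
      then show "mu n (A \<union> B) = mu n A + mu n B" using c by blast
    qed
  qed
  have near: "\<bar>mu n (T -` A \<inter> space M) - mu n A\<bar> \<le> 1 / real (Suc n)" if A: "A \<in> sets M" for n A
  proof -
    have A1: "T -` A \<inter> space M \<in> sets M" using A by (metis pre_1 pre_sets)
    have "mu n (T -` A \<inter> space M) - mu n A
        = (\<Sum>i<Suc n. measure P0 (pre (Suc i) A) - measure P0 (pre i A)) / real (Suc n)"
      using A A1 by (simp add: mu_def pre_1[symmetric] pre_pre1' sum_subtractf diff_divide_distrib)
    also have "\<dots> = (measure P0 (pre (Suc n) A) - measure P0 A) / real (Suc n)"
      by (simp only: sum_lessThan_telescope[of "\<lambda>i. measure P0 (pre i A)"] pre_0[OF A])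
    finally have eq: "mu n (T -` A \<inter> space M) - mu n A = (measure P0 (pre (Suc n) A) - measure P0 A) / real (Suc n)" .
    have "\<bar>measure P0 (pre (Suc n) A) - measure P0 A\<bar> \<le> 1"
      using P0.prob_le_1 measure_nonneg by (smt (verit))
    then show ?thesis unfolding eq by (simp add: divide_right_mono)
  qed
  obtain p where p: "p \<in> Kc" "\<And>U N. open U \<Longrightarrow> p \<in> U \<Longrightarrow> \<exists>n\<ge>N. mu n \<in> U"
    by (rule cluster_point[of Kc mu, OF compact_Kc mu_K]) iprover
  show ?thesis
  proof (rule that[OF p(1)])
    fix A assume A: "A \<in> sets M"
    define B where "B = T -` A \<inter> space M"
    show "p B = p A"
    proof (rule ccontr)
      assume ne: "p B \<noteq> p A"
      define d where "d = \<bar>p B - p A\<bar>"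
      have d: "0 < d" using ne by (simp add: d_def)
      define U where "U = {q :: 'a set \<Rightarrow> real. \<bar>q B - p B\<bar> < d / 3 \<and> \<bar>q A - p A\<bar> < d / 3}"
      have oU: "open U" unfolding U_def
        by (intro open_Collect_conj open_Collect_less continuous_intros continuous_on_product_coordinates)
      have pU: "p \<in> U" using d by (simp add: U_def)
      have fr: "\<exists>n\<ge>N. mu n \<in> U" for N by (rule p(2)[OF oU pU])
      obtain N :: nat where N: "inverse (real (Suc N)) < d / 3"
        using reals_Archimedean[of "d/3"] d by auto
      obtain n where n: "n \<ge> N" "mu n \<in> U" using fr by blast
      have "1 / real (Suc n) \<le> 1 / real (Suc N)" using n(1) by (simp add: frac_le)
      then have "1 / real (Suc n) < d / 3" using N by (simp add: inverse_eq_divide)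
      moreover have "\<bar>mu n B - mu n A\<bar> \<le> 1 / real (Suc n)" unfolding B_def by (rule near[OF A])
      moreover have "\<bar>mu n B - p B\<bar> < d / 3" "\<bar>mu n A - p A\<bar> < d / 3" using n(2) by (auto simp: U_def)
      ultimately show False unfolding d_def by (rule tri_contra)
    qed
  qed
qed

end

lemma shift_conv:
  fixes u t :: "nat \<Rightarrow> real"
  assumes u: "\<And>n. u (Suc n) = a + t n" and t0: "t 0 = 0"
  shows "(\<lambda>n. u n / real n) \<longlonglongrightarrow> c \<longleftrightarrow> (\<lambda>n. t n / real n) \<longlonglongrightarrow> c"
proof
  assume U: "(\<lambda>n. u n / real n) \<longlonglongrightarrow> c"
  then have U': "(\<lambda>n. u (Suc n) / real (Suc n)) \<longlonglongrightarrow> c" by (rule LIMSEQ_Suc)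
  have eq: "t n / real n = (u (Suc n) / real (Suc n) - a / real (Suc n)) * (real (Suc n) / real n)" for n
  proof -
    have "u (Suc n) / real (Suc n) - a / real (Suc n) = t n / real (Suc n)"
      by (simp add: u diff_divide_distrib[symmetric])
    moreover have "t n / real (Suc n) * (real (Suc n) / real n) = t n / real n"
      by (simp del: of_nat_Suc)
    ultimately show ?thesis by simp
  qed
  have "(\<lambda>n. (u (Suc n) / real (Suc n) - a / real (Suc n)) * (real (Suc n) / real n)) \<longlonglongrightarrow> (c - 0) * 1"
    by (intro tendsto_intros U' LIMSEQ_Suc_n_over_n LIMSEQ_Suc[OF lim_const_over_n])
  then show "(\<lambda>n. t n / real n) \<longlonglongrightarrow> c" unfolding eq by simp
next
  assume Tt: "(\<lambda>n. t n / real n) \<longlonglongrightarrow> c"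
  have eq: "u (Suc n) / real (Suc n) = a / real (Suc n) + (t n / real n) * (real n / real (Suc n))" for n
  proof (cases "n = 0")
    case True then show ?thesis using u[of 0] t0 by simp
  next
    case False
    then have "t n / real n * (real n / real (Suc n)) = t n / real (Suc n)" by simp
    then show ?thesis using u[of n] by (simp add: add_divide_distrib del: of_nat_Suc)
  qed
  have "(\<lambda>n. a / real (Suc n) + (t n / real n) * (real n / real (Suc n))) \<longlonglongrightarrow> 0 + c * 1"
    by (intro tendsto_intros Tt LIMSEQ_n_over_Suc_n LIMSEQ_Suc[OF lim_const_over_n])
  then have "(\<lambda>n. u (Suc n) / real (Suc n)) \<longlonglongrightarrow> c" unfolding eq by simp
  then show "(\<lambda>n. u n / real n) \<longlonglongrightarrow> c" by (rule LIMSEQ_imp_Suc)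
qed

lemma funpow_meas: "T \<in> measurable N N \<Longrightarrow> (T ^^ n) \<in> measurable N N"
proof (induction n)
  case (Suc n)
  have "(T ^^ n) \<circ> T \<in> measurable N N" by (rule measurable_comp[OF Suc.prems Suc.IH[OF Suc.prems]])
  then show ?case by (simp only: funpow_Suc_right)
qed simp

lemma bS_meas_gen:
  assumes f: "f \<in> borel_measurable N" and T: "T \<in> measurable N N"
  shows "bS T f n \<in> borel_measurable N"
proof -
  have "(\<lambda>x. f ((T ^^ i) x)) \<in> borel_measurable N" for i
    by (rule measurable_compose[OF funpow_meas[OF T] f])
  then show ?thesis unfolding bS_def[abs_def] by (intro borel_measurable_sum) auto
qed

lemma conv_set_meas:
  fixes a :: "nat \<Rightarrow> 'a \<Rightarrow> real"
  assumes [measurable]: "\<And>n. a n \<in> borel_measurable N"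
  shows "{x\<in>space N. (\<lambda>n. a n x) \<longlonglongrightarrow> c} \<in> sets N"
proof -
  have "{x\<in>space N. (\<lambda>n. a n x) \<longlonglongrightarrow> c} = {x\<in>space N. Cauchy (\<lambda>n. a n x) \<and> lim (\<lambda>n. a n x) = c}"
  proof (intro Collect_cong conj_cong refl iffI)
    fix x assume "(\<lambda>n. a n x) \<longlonglongrightarrow> c"
    then show "Cauchy (\<lambda>n. a n x) \<and> lim (\<lambda>n. a n x) = c"
      by (auto intro: LIMSEQ_imp_Cauchy limI)
  next
    fix x assume "Cauchy (\<lambda>n. a n x) \<and> lim (\<lambda>n. a n x) = c"
    then show "(\<lambda>n. a n x) \<longlonglongrightarrow> c"
      by (metis Cauchy_convergent_iff convergent_LIMSEQ_iff)
  qed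
  also have "\<dots> \<in> sets N" by measurable
  finally show ?thesis .
qed

context setting begin

lemma exists_Q:
  assumes erg: "ergodic_cap M T V"
  shows "\<exists>Q. Q \<in> ergodic_probs M T \<and> measure Q \<in> core M V \<and>
       (\<forall>f::'a \<Rightarrow> real. integrable Q f \<longrightarrow>
          cap_ae M V (\<lambda>\<omega>. (\<lambda>n. (\<Sum>i<n. f ((T ^^ i) \<omega>)) / real n) \<longlonglongrightarrow> integral\<^sup>L Q f))"
proof -
  have TmM: "T \<in> measurable M M" by (rule Tm)
  obtain p where pK: "p \<in> Kc" and pinv: "\<And>A. A \<in> sets M \<Longrightarrow> p (T -` A \<inter> space M) = p A"
    using exists_inv_Kc by blast
  have p0: "\<And>A. A \<notin> sets M \<Longrightarrow> p A = 0" and pnn: "\<And>A. A \<in> sets M \<Longrightarrow> 0 \<le> p A"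
    and pV: "\<And>A. A \<in> sets M \<Longrightarrow> p A \<le> V A" and psp: "p (space M) = 1"
    and padd: "\<And>A B. A \<in> sets M \<Longrightarrow> B \<in> sets M \<Longrightarrow> A \<inter> B = {} \<Longrightarrow> p (A \<union> B) = p A + p B"
    using pK unfolding Kc_def by auto
  have pe: "p {} = 0" using padd[of "{}" "{}"] by simp
  define f where "f A = ennreal (p A)" for A
  have pos: "positive (sets M) f" unfolding positive_def f_def using pe by simp
  have add: "additive (sets M) f" unfolding additive_def f_def
    using padd pnn by (simp add: ennreal_plus)
  have fin: "\<forall>A\<in>sets M. f A \<noteq> \<infinity>" unfolding f_def by simp
  have cont: "(\<lambda>i. f (A i)) \<longlonglongrightarrow> 0" if A: "range A \<subseteq> sets M" "decseq A" "(\<Inter>i. A i) = {}" for A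
  proof -
    have "(\<lambda>i. p (A i)) \<longlonglongrightarrow> 0"
    proof (rule real_tendsto_sandwich[where f="\<lambda>_. 0" and h="\<lambda>i. V (A i)"])
      show "\<forall>\<^sub>F i in sequentially. 0 \<le> p (A i)" using A pnn by (auto intro!: always_eventually)
      show "\<forall>\<^sub>F i in sequentially. p (A i) \<le> V (A i)" using A pV by (auto intro!: always_eventually)
      show "(\<lambda>i. V (A i)) \<longlonglongrightarrow> 0" by (rule up_cont[OF up A])
    qed simp
    then have "(\<lambda>i. ennreal (p (A i))) \<longlonglongrightarrow> ennreal 0" by (rule tendsto_ennrealI)
    then show ?thesis unfolding f_def by simp
  qed
  have ca: "countably_additive (sets M) f"
    by (rule sets.empty_continuous_imp_countably_additive[OF pos add fin cont])
  define Q where "Q = measure_of (space M) (sets M) f"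
  have sQ: "sets Q = sets M" unfolding Q_def by simp
  have spQ: "space Q = space M" unfolding Q_def by simp
  have eQ: "emeasure Q A = ennreal (p A)" if "A \<in> sets M" for A
    unfolding Q_def using emeasure_measure_of_sigma[OF sets.sigma_algebra_axioms pos ca that]
    by (simp add: f_def)
  have mQ: "measure Q A = p A" for A
  proof (cases "A \<in> sets M")
    case True then show ?thesis using eQ pnn by (simp add: measure_def)
  next
    case False then show ?thesis using p0 sQ by (simp add: measure_notin_sets)
  qed
  have mQf: "measure Q = p" using mQ by auto
  interpret Qp: prob_space Q
    by (rule prob_spaceI) (simp add: spQ eQ psp)
  have Q01: "measure Q A = 0 \<or> measure Q A = 1" if A: "A \<in> inv_sets M T" for A
  proof -
    have As: "A \<in> sets M" using A unfolding inv_sets_def by auto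
    have e: "(V A = 0 \<or> V A = 1) \<and> (V A = 0 \<or> V (space M - A) = 0)"
      using erg A unfolding ergodic_cap_def by blast
    show ?thesis
    proof (cases "V A = 0")
      case True then show ?thesis using pV[OF As] pnn[OF As] mQ by (simp add: order_antisym)
    next
      case False
      then have "V (space M - A) = 0" using e by auto
      then have "p (space M - A) = 0" using pV[of "space M - A"] pnn[of "space M - A"] As by auto
      moreover have "p (space M) = p A + p (space M - A)"
        using padd[of A "space M - A"] As sets.sets_into_space[OF As]
        by (simp add: Un_Diff_cancel Un_absorb1)
      ultimately show ?thesis using psp mQ by simp
    qed
  qed
  have QE: "Q \<in> ergodic_probs M T"
    unfolding ergodic_probs_def
    using Qp.prob_space_axioms sQ pinv Q01 by (simp add: mQf)
  have Qcore: "measure Q \<in> core M V"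
    unfolding core_def mQf
  proof (intro CollectI conjI ballI impI)
    fix A assume A: "A \<in> sets M"
    show "0 \<le> p A" "p A \<le> V A" using pnn[OF A] pV[OF A] by auto
    show "p A \<le> 1" using pV[OF A] V_le1[OF A] by simp
  next
    show "p (space M) = 1" by (rule psp)
  next
    fix A B assume "A \<in> sets M" "B \<in> sets M" "A \<inter> B = {}"
    then show "p (A \<union> B) = p A + p B" by (rule padd)
  qed
  have TQ: "T \<in> measurable Q Q" using Tm by (simp add: measurable_cong_sets[OF sQ sQ])
  have distrQ: "distr Q Q T = Q"
  proof (rule measure_eqI)
    show "sets (distr Q Q T) = sets Q" by simp
    fix A assume "A \<in> sets (distr Q Q T)"
    then have A: "A \<in> sets M" using sQ by simp
    have "emeasure (distr Q Q T) A = emeasure Q (T -` A \<inter> space Q)"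
      using A sQ by (intro emeasure_distr TQ) auto
    also have "\<dots> = ennreal (p (T -` A \<inter> space M))"
    proof -
      have "T -` A \<inter> space M \<in> sets M" using pre_sets[OF A, of 1] unfolding pre_1 .
      then show ?thesis using eQ spQ by simp
    qed
    also have "\<dots> = emeasure Q A" using pinv[OF A] eQ[OF A] by simp
    finally show "emeasure (distr Q Q T) A = emeasure Q A" .
  qed
  interpret mpt Q T by unfold_locales (rule TQ, rule distrQ)
  have ergQ: "measure Q A = 0 \<or> measure Q A = 1" if "A \<in> sets Q" "T -` A \<inter> space Q = A" for A
    using Q01[of A] that sQ spQ by (simp add: inv_sets_def)
  have ae: "cap_ae M V (\<lambda>\<omega>. (\<lambda>n. (\<Sum>i<n. g ((T ^^ i) \<omega>)) / real n) \<longlonglongrightarrow> integral\<^sup>L Q g)"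
    if g: "integrable Q g" for g :: "'a \<Rightarrow> real"
  proof -
    define c where "c = integral\<^sup>L Q g"
    have gM: "g \<in> borel_measurable M" using g measurable_cong_sets[OF sQ refl] by auto
    define C where "C = {x\<in>space M. (\<lambda>n. bS T g n x / real n) \<longlonglongrightarrow> c}"
    have Cs: "C \<in> sets M" unfolding C_def
      by (rule conv_set_meas) (intro borel_measurable_divide bS_meas_gen[OF gM TmM] borel_measurable_const)
    have B: "AE x in Q. (\<lambda>n. bS T g n x / real n) \<longlonglongrightarrow> c"
      unfolding c_def by (rule birkhoff[OF ergQ g]) auto
    have "AE x in Q. x \<in> C"
      using B by (rule AE_mp) (auto simp: C_def spQ intro!: AE_I2)
    then have "measure Q C = 1" using Cs sQ by (simp add: Qp.prob_eq_1)
    then have pC: "p C = 1" using mQ by simp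
    have Cinv: "T -` C \<inter> space M = C"
    proof (intro set_eqI iffI)
      fix x assume x: "x \<in> T -` C \<inter> space M"
      have "(\<lambda>n. bS T g n (T x) / real n) \<longlonglongrightarrow> c" using x by (auto simp: C_def)
      then have "(\<lambda>n. bS T g n x / real n) \<longlonglongrightarrow> c"
        using shift_conv[of "\<lambda>n. bS T g n x" "g x" "\<lambda>n. bS T g n (T x)" c] by (simp add: bS_Suc)
      then show "x \<in> C" using x by (auto simp: C_def)
    next
      fix x assume x: "x \<in> C"
      then have xs: "x \<in> space M" by (auto simp: C_def)
      have "(\<lambda>n. bS T g n x / real n) \<longlonglongrightarrow> c" using x by (auto simp: C_def)
      then have "(\<lambda>n. bS T g n (T x) / real n) \<longlonglongrightarrow> c"
        using shift_conv[of "\<lambda>n. bS T g n x" "g x" "\<lambda>n. bS T g n (T x)" c] by (simp add: bS_Suc)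
      then show "x \<in> T -` C \<inter> space M" using xs T_space[OF xs] by (auto simp: C_def)
    qed
    have "C \<in> inv_sets M T" using Cs Cinv by (simp add: inv_sets_def)
    then have e: "(V C = 0 \<or> V C = 1) \<and> (V C = 0 \<or> V (space M - C) = 0)"
      using erg unfolding ergodic_cap_def by blast
    have "V C \<noteq> 0" using pV[OF Cs] pC by auto
    then have "V (space M - C) = 0" using e by auto
    then show ?thesis unfolding cap_ae_def c_def[symmetric]
      using Cs by (intro bexI[of _ C]) (auto simp: C_def bS_def)
  qed
  show ?thesis using QE Qcore ae by blast
qed

end

context setting begin

lemma V_mono: "A \<in> sets M \<Longrightarrow> B \<in> sets M \<Longrightarrow> A \<subseteq> B \<Longrightarrow> V A \<le> V B"
  using cap unfolding capacity_def by blast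

lemma V_space: "V (space M) = 1"
  using cap unfolding capacity_def by blast

lemma unique_Q:
  assumes Q1: "Q1 \<in> ergodic_probs M T" and Q2: "Q2 \<in> ergodic_probs M T"
    and P1: "\<forall>f::'a \<Rightarrow> real. integrable Q1 f \<longrightarrow>
          cap_ae M V (\<lambda>\<omega>. (\<lambda>n. (\<Sum>i<n. f ((T ^^ i) \<omega>)) / real n) \<longlonglongrightarrow> integral\<^sup>L Q1 f)"
    and P2: "\<forall>f::'a \<Rightarrow> real. integrable Q2 f \<longrightarrow>
          cap_ae M V (\<lambda>\<omega>. (\<lambda>n. (\<Sum>i<n. f ((T ^^ i) \<omega>)) / real n) \<longlonglongrightarrow> integral\<^sup>L Q2 f)"
  shows "Q1 = Q2"
proof -
  have pQ1: "prob_space Q1" and sQ1: "sets Q1 = sets M" using Q1 unfolding ergodic_probs_def by auto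
  have pQ2: "prob_space Q2" and sQ2: "sets Q2 = sets M" using Q2 unfolding ergodic_probs_def by auto
  interpret Q1: prob_space Q1 by (rule pQ1)
  interpret Q2: prob_space Q2 by (rule pQ2)
  have spQ1: "space Q1 = space M" using sQ1 by (rule sets_eq_imp_space_eq)
  have spQ2: "space Q2 = space M" using sQ2 by (rule sets_eq_imp_space_eq)
  have meq: "measure Q1 A = measure Q2 A" if A: "A \<in> sets M" for A
  proof -
    have i1: "integrable Q1 (indicator A :: 'a \<Rightarrow> real)"
      by (rule integrable_real_indicator) (use A sQ1 Q1.emeasure_eq_measure in \<open>auto\<close>)
    have i2: "integrable Q2 (indicator A :: 'a \<Rightarrow> real)"
      by (rule integrable_real_indicator) (use A sQ2 Q2.emeasure_eq_measure in \<open>auto\<close>)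
    have int1: "integral\<^sup>L Q1 (indicator A :: 'a \<Rightarrow> real) = measure Q1 A"
      using A sQ1 spQ1 sets.sets_into_space[OF A] by (simp add: Int_absorb2)
    have int2: "integral\<^sup>L Q2 (indicator A :: 'a \<Rightarrow> real) = measure Q2 A"
      using A sQ2 spQ2 sets.sets_into_space[OF A] by (simp add: Int_absorb2)
    obtain C1 where C1: "C1 \<in> sets M" "V (space M - C1) = 0"
      "\<And>\<omega>. \<omega> \<in> C1 \<Longrightarrow> (\<lambda>n. (\<Sum>i<n. indicator A ((T ^^ i) \<omega>)) / real n) \<longlonglongrightarrow> measure Q1 A"
      using P1 i1 int1 unfolding cap_ae_def by auto
    obtain C2 where C2: "C2 \<in> sets M" "V (space M - C2) = 0"
      "\<And>\<omega>. \<omega> \<in> C2 \<Longrightarrow> (\<lambda>n. (\<Sum>i<n. indicator A ((T ^^ i) \<omega>)) / real n) \<longlonglongrightarrow> measure Q2 A"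
      using P2 i2 int2 unfolding cap_ae_def by auto
    have "V ((space M - C1) \<union> (space M - C2)) \<le> V (space M - C1) + V (space M - C2)"
      using C1(1) C2(1) by (intro up_subadd[OF up]) auto
    then have "V (space M - (C1 \<inter> C2)) \<le> 0" using C1 C2 by (simp add: Diff_Int)
    then have "C1 \<inter> C2 \<noteq> {}" using V_space by auto
    then obtain \<omega> where "\<omega> \<in> C1" "\<omega> \<in> C2" by blast
    from LIMSEQ_unique[OF C1(3)[OF this(1)] C2(3)[OF this(2)]] show ?thesis .
  qed
  show ?thesis
  proof (rule measure_eqI)
    show "sets Q1 = sets Q2" using sQ1 sQ2 by simp
    fix A assume "A \<in> sets Q1"
    then have A: "A \<in> sets M" using sQ1 by simp
    show "emeasure Q1 A = emeasure Q2 A"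
      using meq[OF A] Q1.emeasure_eq_measure Q2.emeasure_eq_measure
      by simp
  qed
qed

lemma pre_inv: "B \<in> inv_sets M T \<Longrightarrow> pre i B = B"
proof (induction i)
  case 0 then show ?case by (simp add: pre_0 inv_sets_def)
next
  case (Suc i)
  then show ?case unfolding pre_Suc using Suc by (simp add: inv_sets_def)
qed

lemma reverse:
  assumes Q: "Q \<in> ergodic_probs M T"
    and P: "\<forall>f::'a \<Rightarrow> real. integrable Q f \<longrightarrow>
          cap_ae M V (\<lambda>\<omega>. (\<lambda>n. (\<Sum>i<n. f ((T ^^ i) \<omega>)) / real n) \<longlonglongrightarrow> integral\<^sup>L Q f)"
  shows "ergodic_cap M T V"
  unfolding ergodic_cap_def
proof (rule conjI[OF inv], intro ballI)
  fix B assume B: "B \<in> inv_sets M T"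
  have Bs: "B \<in> sets M" using B by (simp add: inv_sets_def)
  have pQ: "prob_space Q" and sQ: "sets Q = sets M"
    and Q01: "measure Q B = 0 \<or> measure Q B = 1" using Q B unfolding ergodic_probs_def by auto
  interpret Qp: prob_space Q by (rule pQ)
  have spQ: "space Q = space M" using sQ by (rule sets_eq_imp_space_eq)
  have i: "integrable Q (indicator B :: 'a \<Rightarrow> real)"
    by (rule integrable_real_indicator) (use Bs sQ Qp.emeasure_eq_measure in \<open>auto\<close>)
  have int: "integral\<^sup>L Q (indicator B :: 'a \<Rightarrow> real) = measure Q B"
    using Bs sQ spQ sets.sets_into_space[OF Bs] by (simp add: Int_absorb2)
  obtain A where A: "A \<in> sets M" "V (space M - A) = 0"
    "\<And>\<omega>. \<omega> \<in> A \<Longrightarrow> (\<lambda>n. (\<Sum>i<n. indicator B ((T ^^ i) \<omega>)) / real n) \<longlonglongrightarrow> measure Q B"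
    using P i int unfolding cap_ae_def by auto
  have val: "indicator B \<omega> = measure Q B" if w: "\<omega> \<in> A" for \<omega>
  proof -
    have ws: "\<omega> \<in> space M" using w sets.sets_into_space[OF A(1)] by auto
    have "indicator B ((T ^^ i) \<omega>) = (indicator B \<omega> :: real)" for i
    proof -
      have "((T ^^ i) \<omega> \<in> B) = (\<omega> \<in> pre i B)" using ws by (simp add: pre_def)
      then show ?thesis using pre_inv[OF B, of i] by (simp add: indicator_def)
    qed
    then have "eventually (\<lambda>n. (\<Sum>i<n. indicator B ((T ^^ i) \<omega>)) / real n = (indicator B \<omega> :: real)) sequentially"
      by (intro eventually_sequentiallyI[of 1]) simp
    then have "(\<lambda>n. (\<Sum>i<n. indicator B ((T ^^ i) \<omega>)) / real n) \<longlonglongrightarrow> (indicator B \<omega> :: real)"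
      by (rule tendsto_eventually[OF eventually_mono]) auto
    from LIMSEQ_unique[OF this A(3)[OF w]] show ?thesis .
  qed
  have VB0: "0 \<le> V B" by (rule V_nn[OF Bs])
  show "(V B = 0 \<or> V B = 1) \<and> (V B = 0 \<or> V (space M - B) = 0)"
  proof (cases "measure Q B = 0")
    case True
    then have "B \<subseteq> space M - A" using val sets.sets_into_space[OF Bs] by (force simp: indicator_def)
    then have "V B \<le> V (space M - A)" using Bs A(1) by (intro V_mono) auto
    then show ?thesis using A(2) VB0 by simp
  next
    case False
    then have Q1: "measure Q B = 1" using Q01 by simp
    then have "A \<subseteq> B" using val by (force simp: indicator_def)
    then have "space M - B \<subseteq> space M - A" by blast
    then have "V (space M - B) \<le> V (space M - A)" using Bs A(1) by (intro V_mono) auto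
    moreover have "0 \<le> V (space M - B)" using Bs by (intro V_nn) auto
    ultimately have "V (space M - B) = 0" using A(2) by simp
    moreover have "1 \<le> V B + V (space M - B)" by (rule up_compl[OF up Bs])
    ultimately show ?thesis using V_le1[OF Bs] by simp
  qed
qed

end

theorem theorem3p3:
  fixes M :: "'a measure" and T :: "'a \<Rightarrow> 'a" and V :: "'a set \<Rightarrow> real"
  assumes "T \<in> measurable M M"
    and "upper_probability M V"
    and "T_invariant_cap M T V"
  shows "ergodic_cap M T V \<longleftrightarrow>
    (\<exists>!Q. Q \<in> ergodic_probs M T \<and> measure Q \<in> core M V \<and>
       (\<forall>f::'a \<Rightarrow> real. integrable Q f \<longrightarrow>
          cap_ae M V (\<lambda>\<omega>. (\<lambda>n. (\<Sum>i<n. f ((T ^^ i) \<omega>)) / real n) \<longlonglongrightarrow> integral\<^sup>L Q f)))"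
proof -
  interpret setting M T V using assms by unfold_locales
  show ?thesis
  proof
    assume erg: "ergodic_cap M T V"
    obtain Q where Q: "Q \<in> ergodic_probs M T" "measure Q \<in> core M V"
      "\<forall>f::'a \<Rightarrow> real. integrable Q f \<longrightarrow>
          cap_ae M V (\<lambda>\<omega>. (\<lambda>n. (\<Sum>i<n. f ((T ^^ i) \<omega>)) / real n) \<longlonglongrightarrow> integral\<^sup>L Q f)"
      using exists_Q[OF erg] by blast
    show "\<exists>!Q. Q \<in> ergodic_probs M T \<and> measure Q \<in> core M V \<and>
       (\<forall>f::'a \<Rightarrow> real. integrable Q f \<longrightarrow>
          cap_ae M V (\<lambda>\<omega>. (\<lambda>n. (\<Sum>i<n. f ((T ^^ i) \<omega>)) / real n) \<longlonglongrightarrow> integral\<^sup>L Q f))"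
    proof (rule ex1I[of _ Q])
      show "Q \<in> ergodic_probs M T \<and> measure Q \<in> core M V \<and>
       (\<forall>f::'a \<Rightarrow> real. integrable Q f \<longrightarrow>
          cap_ae M V (\<lambda>\<omega>. (\<lambda>n. (\<Sum>i<n. f ((T ^^ i) \<omega>)) / real n) \<longlonglongrightarrow> integral\<^sup>L Q f))"
        using Q by (intro conjI)
    next
      fix Q' assume Q': "Q' \<in> ergodic_probs M T \<and> measure Q' \<in> core M V \<and>
       (\<forall>f::'a \<Rightarrow> real. integrable Q' f \<longrightarrow>
          cap_ae M V (\<lambda>\<omega>. (\<lambda>n. (\<Sum>i<n. f ((T ^^ i) \<omega>)) / real n) \<longlonglongrightarrow> integral\<^sup>L Q' f))"
      show "Q' = Q"
        by (rule unique_Q[OF conjunct1[OF Q'] Q(1) conjunct2[OF conjunct2[OF Q']] Q(3)])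
    qed
  next
    assume "\<exists>!Q. Q \<in> ergodic_probs M T \<and> measure Q \<in> core M V \<and>
       (\<forall>f::'a \<Rightarrow> real. integrable Q f \<longrightarrow>
          cap_ae M V (\<lambda>\<omega>. (\<lambda>n. (\<Sum>i<n. f ((T ^^ i) \<omega>)) / real n) \<longlonglongrightarrow> integral\<^sup>L Q f))"
    then obtain Q where Q: "Q \<in> ergodic_probs M T \<and> measure Q \<in> core M V \<and>
       (\<forall>f::'a \<Rightarrow> real. integrable Q f \<longrightarrow>
          cap_ae M V (\<lambda>\<omega>. (\<lambda>n. (\<Sum>i<n. f ((T ^^ i) \<omega>)) / real n) \<longlonglongrightarrow> integral\<^sup>L Q f))"
      by (rule ex1E)
    show "ergodic_cap M T V"
      by (rule reverse[OF conjunct1[OF Q] conjunct2[OF conjunct2[OF Q]]])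
  qed
qed

end
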